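(* Let $q \geq 1$ and let $k$ be a positive integer with $k < n$. Let $\boldsymbol{B}$ be a dictionary as described in the context, and assume that every signal $\boldsymbol{y} \in \mathbb{R}^D$ that admits a $k$-block-sparse representation admits a unique one. If $$\sqrt{\frac{1+\sigma_q}{1+\epsilon_q}}\;\zeta_k + \zeta_{k-1} < \frac{1-\epsilon_q}{1+\epsilon_q},$$ then for every $\Lambda_k \subseteq \{1,\dots,n\}$ with $|\Lambda_k| = k$ and every $\boldsymbol{y} \in \bigoplus_{i\in\Lambda_k}\mathcal{S}_i$, every optimal solution $\boldsymbol{c}^*$ of $P_{\ell_q/\ell_1}(\boldsymbol{y})$ satisfies $\boldsymbol{c}^*[i] = \boldsymbol{0}$ for all $i \notin \Lambda_k$; i.e. the solution of $P_{\ell_q/\ell_1}$ is equivalent to that of $P_{\ell_q/\ell_0}$.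
   Context: $\boldsymbol{B} = [\boldsymbol{B}[1]\ \cdots\ \boldsymbol{B}[n]] \in \mathbb{R}^{D\times N}$ has unit-Euclidean-norm columns, blocks $\boldsymbol{B}[i] \in \mathbb{R}^{D\times m_i}$ (possibly with linearly dependent columns); $\mathcal{S}_i = \operatorname{span}(\boldsymbol{B}[i])$ has dimension $d_i$, and $\mathcal{S}_i\cap\mathcal{S}_j = \{0\}$ for $i\ne j$. Vectors $\boldsymbol{c}\in\mathbb{R}^N$ are written $(\boldsymbol{c}[1];\dots;\boldsymbol{c}[n])$, $\boldsymbol{c}[i]\in\mathbb{R}^{m_i}$. A $k$-block-sparse representation of $\boldsymbol{y}$ is $\boldsymbol{y}=\sum_{i\in\Lambda}\boldsymbol{s}_i$ with $|\Lambda|\le k$, $\boldsymbol{s}_i\in\mathcal{S}_i\setminus\{0\}$; uniqueness means any two have the same $\Lambda$ and the same $\boldsymbol{s}_i$. $P_{\ell_q/\ell_1}(\boldsymbol{y})$: $\min \sum_i \|\boldsymbol{c}[i]\|_q$ s.t. $\boldsymbol{y}=\boldsymbol{B}\boldsymbol{c}$; $P_{\ell_q/\ell_0}(\boldsymbol{y})$: minimize the number of nonzero blocks $\boldsymbol{c}[i]$ s.t. $\boldsymbol{y}=\boldsymbol{B}\boldsymbol{c}$. Subspace coherence: $\mu(\mathcal{S}_i,\mathcal{S}_j)=\max_{0\ne\boldsymbol{x}\in\mathcal{S}_i,\,0\ne\boldsymbol{z}\in\mathcal{S}_j}\frac{|\boldsymbol{x}^\top\boldsymbol{z}|}{\|\boldsymbol{x}\|_2\|\boldsymbol{z}\|_2}$.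 $k$-cumulative subspace coherence: $\zeta_k = \max_{\Lambda_k}\max_{i\notin\Lambda_k}\sum_{j\in\Lambda_k}\mu(\mathcal{S}_i,\mathcal{S}_j)$, the outer max over all $k$-element subsets $\Lambda_k\subseteq\{1,\dots,n\}$, with $\zeta_0 = 0$. Intra-block $q$-restricted isometry constant $\epsilon_q$: the smallest constant such that for every $i$ there is a full column-rank submatrix $\bar{\boldsymbol{B}}[i]\in\mathbb{R}^{D\times d_i}$ of $\boldsymbol{B}[i]$ with $(1-\epsilon_q)\|\bar{\boldsymbol{c}}\|_q^2 \le \|\bar{\boldsymbol{B}}[i]\bar{\boldsymbol{c}}\|_2^2 \le (1+\epsilon_q)\|\bar{\boldsymbol{c}}\|_q^2$ for all $\bar{\boldsymbol{c}}\in\mathbb{R}^{d_i}$. Upper intra-block $q$-restricted isometry constant $\sigma_q$: the smallest constant such that $\|\boldsymbol{B}[i]\boldsymbol{c}[i]\|_2^2\le(1+\sigma_q)\|\boldsymbol{c}[i]\|_q^2$ for all $i$ and all $\boldsymbol{c}[i]$. *)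

theory Defs
  imports "HOL-Analysis.Analysis"
begin

text \<open>Dictionary: n blocks; block i (i < n) has m i columns b i j (j < m i),
  each a vector of the ambient space 'a (playing the role of R^D).
  Coefficient vectors c are functions c i j; block c[i] is (\<lambda>j. c i j) on j < m i.\<close>

definition lq_norm :: "real \<Rightarrow> nat \<Rightarrow> (nat \<Rightarrow> real) \<Rightarrow> real" where
  "lq_norm q mm v = (\<Sum>j<mm. \<bar>v j\<bar> powr q) powr (1 / q)"

definition lq_norm_on :: "real \<Rightarrow> nat set \<Rightarrow> (nat \<Rightarrow> real) \<Rightarrow> real" where
  "lq_norm_on q J v = (\<Sum>j\<in>J. \<bar>v j\<bar> powr q) powr (1 / q)"

definition blk_subspace :: "(nat \<Rightarrow> nat \<Rightarrow> 'a::euclidean_space) \<Rightarrow> (nat \<Rightarrow> nat) \<Rightarrow> nat \<Rightarrow> 'a set" where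
  "blk_subspace b m i = span {b i j | j. j < m i}"

definition dict_mult :: "(nat \<Rightarrow> nat \<Rightarrow> 'a::euclidean_space) \<Rightarrow> (nat \<Rightarrow> nat) \<Rightarrow> nat \<Rightarrow> (nat \<Rightarrow> nat \<Rightarrow> real) \<Rightarrow> 'a" where
  "dict_mult b m n c = (\<Sum>i<n. \<Sum>j<m i. c i j *\<^sub>R b i j)"

definition mixed_norm :: "real \<Rightarrow> (nat \<Rightarrow> nat) \<Rightarrow> nat \<Rightarrow> (nat \<Rightarrow> nat \<Rightarrow> real) \<Rightarrow> real" where
  "mixed_norm q m n c = (\<Sum>i<n. lq_norm q (m i) (c i))"

definition optimal_lq_l1 :: "real \<Rightarrow> (nat \<Rightarrow> nat \<Rightarrow> 'a::euclidean_space) \<Rightarrow> (nat \<Rightarrow> nat) \<Rightarrow> nat \<Rightarrow> 'a \<Rightarrow> (nat \<Rightarrow> nat \<Rightarrow> real) \<Rightarrow> bool" where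
  "optimal_lq_l1 q b m n y c \<longleftrightarrow> y = dict_mult b m n c \<and>
     (\<forall>c'. y = dict_mult b m n c' \<longrightarrow> mixed_norm q m n c \<le> mixed_norm q m n c')"

definition sub_coh :: "(nat \<Rightarrow> nat \<Rightarrow> 'a::euclidean_space) \<Rightarrow> (nat \<Rightarrow> nat) \<Rightarrow> nat \<Rightarrow> nat \<Rightarrow> real" where
  "sub_coh b m i j = Sup {\<bar>x \<bullet> z\<bar> / (norm x * norm z) | x z.
      x \<in> blk_subspace b m i \<and> x \<noteq> 0 \<and> z \<in> blk_subspace b m j \<and> z \<noteq> 0}"

definition cum_coh :: "(nat \<Rightarrow> nat \<Rightarrow> 'a::euclidean_space) \<Rightarrow> (nat \<Rightarrow> nat) \<Rightarrow> nat \<Rightarrow> nat \<Rightarrow> real" where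
  "cum_coh b m n k = (if k = 0 then 0 else
     Max {\<Sum>j\<in>L. sub_coh b m i j | L i. L \<subseteq> {..<n} \<and> card L = k \<and> i < n \<and> i \<notin> L})"

definition intra_rip_ok :: "real \<Rightarrow> (nat \<Rightarrow> nat \<Rightarrow> 'a::euclidean_space) \<Rightarrow> (nat \<Rightarrow> nat) \<Rightarrow> nat \<Rightarrow> real \<Rightarrow> bool" where
  "intra_rip_ok q b m n e \<longleftrightarrow> (\<forall>i<n. \<exists>J. J \<subseteq> {..<m i} \<and> card J = dim (blk_subspace b m i) \<and>
      (\<forall>c. (\<Sum>j\<in>J. c j *\<^sub>R b i j) = 0 \<longrightarrow> (\<forall>j\<in>J. c j = 0)) \<and>
      (\<forall>c. (1 - e) * (lq_norm_on q J c)\<^sup>2 \<le> (norm (\<Sum>j\<in>J. c j *\<^sub>R b i j))\<^sup>2 \<and>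
           (norm (\<Sum>j\<in>J. c j *\<^sub>R b i j))\<^sup>2 \<le> (1 + e) * (lq_norm_on q J c)\<^sup>2))"

definition intra_rip :: "real \<Rightarrow> (nat \<Rightarrow> nat \<Rightarrow> 'a::euclidean_space) \<Rightarrow> (nat \<Rightarrow> nat) \<Rightarrow> nat \<Rightarrow> real" where
  "intra_rip q b m n = Inf {e. intra_rip_ok q b m n e}"

definition upper_intra_rip :: "real \<Rightarrow> (nat \<Rightarrow> nat \<Rightarrow> 'a::euclidean_space) \<Rightarrow> (nat \<Rightarrow> nat) \<Rightarrow> nat \<Rightarrow> real" where
  "upper_intra_rip q b m n = Inf {s. \<forall>i<n. \<forall>c.
      (norm (\<Sum>j<m i. c j *\<^sub>R b i j))\<^sup>2 \<le> (1 + s) * (lq_norm q (m i) c)\<^sup>2}"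

definition block_sparse_rep :: "(nat \<Rightarrow> nat \<Rightarrow> 'a::euclidean_space) \<Rightarrow> (nat \<Rightarrow> nat) \<Rightarrow> nat \<Rightarrow> nat \<Rightarrow> 'a \<Rightarrow> nat set \<Rightarrow> (nat \<Rightarrow> 'a) \<Rightarrow> bool" where
  "block_sparse_rep b m n k y L s \<longleftrightarrow> L \<subseteq> {..<n} \<and> card L \<le> k \<and>
     (\<forall>i\<in>L. s i \<in> blk_subspace b m i \<and> s i \<noteq> 0) \<and> y = (\<Sum>i\<in>L. s i)"

definition unique_block_sparse :: "(nat \<Rightarrow> nat \<Rightarrow> 'a::euclidean_space) \<Rightarrow> (nat \<Rightarrow> nat) \<Rightarrow> nat \<Rightarrow> nat \<Rightarrow> bool" where
  "unique_block_sparse b m n k \<longleftrightarrow> (\<forall>y L s L' s'. block_sparse_rep b m n k y L s \<and>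
      block_sparse_rep b m n k y L' s' \<longrightarrow> L = L' \<and> (\<forall>i\<in>L. s i = s' i))"

end

theory Submission imports Defs begin

lemma lq_eq: "lq_norm q mm v = lq_norm_on q {..<mm} v"
  by (simp add: lq_norm_def lq_norm_on_def)

lemma lq_nonneg: "0 \<le> lq_norm_on q J v"
  by (simp add: lq_norm_on_def)

lemma lq_zero:
  assumes "finite J" "q > 0" "lq_norm_on q J v = 0" "j \<in> J"
  shows "v j = 0"
proof -
  have "(\<Sum>j\<in>J. \<bar>v j\<bar> powr q) = 0" using assms(3) by (simp add: lq_norm_on_def)
  then have "\<forall>j\<in>J. \<bar>v j\<bar> powr q = 0"
    using sum_nonneg_eq_0_iff[OF assms(1), of "\<lambda>j. \<bar>v j\<bar> powr q"] by simp
  then show ?thesis using assms(4) by simp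
qed

lemma lq_coord:
  assumes "finite J" "q > 0" "j \<in> J"
  shows "\<bar>v j\<bar> \<le> lq_norm_on q J v"
proof -
  have "\<bar>v j\<bar> = (\<bar>v j\<bar> powr q) powr (1/q)" using assms by (simp add: powr_powr)
  also have "\<dots> \<le> (\<Sum>j\<in>J. \<bar>v j\<bar> powr q) powr (1/q)"
    apply (rule powr_mono2) using assms by (auto intro: member_le_sum)
  finally show ?thesis by (simp add: lq_norm_on_def)
qed

lemma conv0:
  fixes a b t q :: real
  assumes "0 \<le> a" "0 \<le> b" "0 \<le> t" "t \<le> 1" "q \<ge> 1"
  shows "(t*a + (1-t)*b) powr q \<le> t * a powr q + (1-t) * b powr q"
proof (cases "a = 0 \<or> b = 0")
  case True
  have k: "x powr q \<le> x" if "0 \<le> x" "x \<le> 1" for x :: real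
    using powr_mono'[of 1 q x] that assms by simp
  show ?thesis
  proof (cases "a = 0")
    case True
    have "((1-t)*b) powr q = (1-t) powr q * b powr q" using assms by (simp add: powr_mult)
    also have "\<dots> \<le> (1-t) * b powr q" using k[of "1-t"] assms by (intro mult_right_mono) auto
    finally show ?thesis using True assms by simp
  next
    case False
    then have "b = 0" using \<open>a = 0 \<or> b = 0\<close> by simp
    have "(t*a) powr q = t powr q * a powr q" using assms by (simp add: powr_mult)
    also have "\<dots> \<le> t * a powr q" using k[of "t"] assms by (intro mult_right_mono) auto
    finally show ?thesis using \<open>b=0\<close> assms by simp
  qed
next
  case False
  then have "a > 0" "b > 0" using assms by auto
  have "convex_on {0<..} (\<lambda>x::real. x powr q)" using powr_convex assms by simp
  from convex_onD[OF this, of "1-t" a b] show ?thesis using assms \<open>a>0\<close> \<open>b>0\<close>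
    by (simp add: algebra_simps)
qed

lemma conv_abs:
  fixes x y t q :: real
  assumes "0 \<le> t" "t \<le> 1" "q \<ge> 1"
  shows "\<bar>t*x + (1-t)*y\<bar> powr q \<le> t * \<bar>x\<bar> powr q + (1-t) * \<bar>y\<bar> powr q"
proof -
  have "\<bar>t*x + (1-t)*y\<bar> \<le> \<bar>t*x\<bar> + \<bar>(1-t)*y\<bar>" by (rule abs_triangle_ineq)
  also have "\<dots> = t*\<bar>x\<bar> + (1-t)*\<bar>y\<bar>" using assms by (simp add: abs_mult)
  finally have "\<bar>t*x + (1-t)*y\<bar> \<le> t*\<bar>x\<bar> + (1-t)*\<bar>y\<bar>" .
  then have "\<bar>t*x + (1-t)*y\<bar> powr q \<le> (t*\<bar>x\<bar> + (1-t)*\<bar>y\<bar>) powr q"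
    using assms by (intro powr_mono2) auto
  also have "\<dots> \<le> t * \<bar>x\<bar> powr q + (1-t) * \<bar>y\<bar> powr q"
    using conv0 assms by simp
  finally show ?thesis .
qed


lemma lq_pow:
  assumes "q > 0"
  shows "(lq_norm_on q J v) powr q = (\<Sum>j\<in>J. \<bar>v j\<bar> powr q)"
proof -
  have "0 \<le> (\<Sum>j\<in>J. \<bar>v j\<bar> powr q)" by (simp add: sum_nonneg)
  then show ?thesis using assms by (simp add: lq_norm_on_def powr_powr)
qed

lemma lq_minkowski:
  assumes J: "finite J" and q: "q \<ge> 1"
  shows "lq_norm_on q J (\<lambda>j. u j + w j) \<le> lq_norm_on q J u + lq_norm_on q J w"
proof -
  define a where "a = lq_norm_on q J u"
  define b where "b = lq_norm_on q J w"
  have q0: "q > 0" using q by simp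
  have a0: "a \<ge> 0" "b \<ge> 0" unfolding a_def b_def by (simp_all add: lq_nonneg)
  show ?thesis
  proof (cases "a = 0 \<or> b = 0")
    case True
    show ?thesis
    proof (cases "a = 0")
      case True
      then have "\<forall>j\<in>J. u j = 0" using lq_zero[OF J q0] unfolding a_def by blast
      then have "lq_norm_on q J (\<lambda>j. u j + w j) = lq_norm_on q J w"
        unfolding lq_norm_on_def by (simp cong: sum.cong)
      then show ?thesis using True unfolding a_def b_def by simp
    next
      case False
      then have "b = 0" using True by simp
      then have "\<forall>j\<in>J. w j = 0" using lq_zero[OF J q0] unfolding b_def by blast
      then have "lq_norm_on q J (\<lambda>j. u j + w j) = lq_norm_on q J u"
        unfolding lq_norm_on_def by (simp cong: sum.cong)
      then show ?thesis unfolding a_def b_def by (simp add: lq_nonneg)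
    qed
  next
    case False
    then have ap: "a > 0" "b > 0" using a0 by auto
    define t where "t = a / (a + b)"
    have t: "0 \<le> t" "t \<le> 1" "1 - t = b / (a + b)" using ap unfolding t_def by (auto simp: field_simps)
    have Fu: "(\<Sum>j\<in>J. \<bar>u j\<bar> powr q) = a powr q" unfolding a_def using lq_pow[OF q0] by simp
    have Fw: "(\<Sum>j\<in>J. \<bar>w j\<bar> powr q) = b powr q" unfolding b_def using lq_pow[OF q0] by simp
    have "(\<Sum>j\<in>J. \<bar>(u j + w j) / (a + b)\<bar> powr q)
        = (\<Sum>j\<in>J. \<bar>t * (u j / a) + (1 - t) * (w j / b)\<bar> powr q)"
    proof (intro sum.cong refl)
      fix j
      have e1: "t * (u j / a) = u j / (a + b)" using ap unfolding t_def by simp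
      have e2: "(1 - t) * (w j / b) = w j / (a + b)" using ap unfolding t(3) by simp
      show "\<bar>(u j + w j) / (a + b)\<bar> powr q = \<bar>t * (u j / a) + (1 - t) * (w j / b)\<bar> powr q"
        unfolding e1 e2 add_divide_distrib ..
    qed
    also have "\<dots> \<le> (\<Sum>j\<in>J. t * \<bar>u j / a\<bar> powr q + (1 - t) * \<bar>w j / b\<bar> powr q)"
      by (intro sum_mono conv_abs t q)
    also have "\<dots> = t * ((\<Sum>j\<in>J. \<bar>u j\<bar> powr q) / a powr q) + (1 - t) * ((\<Sum>j\<in>J. \<bar>w j\<bar> powr q) / b powr q)"
      using ap by (simp add: sum.distrib sum_distrib_left sum_divide_distrib powr_divide abs_divide)
    also have "\<dots> = 1" using ap by (simp add: Fu Fw)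
    finally have le1: "(\<Sum>j\<in>J. \<bar>(u j + w j) / (a + b)\<bar> powr q) \<le> 1" .
    have "(\<Sum>j\<in>J. \<bar>(u j + w j) / (a + b)\<bar> powr q) = (\<Sum>j\<in>J. \<bar>u j + w j\<bar> powr q) / (a + b) powr q"
      using ap by (simp add: sum_divide_distrib powr_divide abs_divide)
    with le1 have "(\<Sum>j\<in>J. \<bar>u j + w j\<bar> powr q) \<le> (a + b) powr q"
      using ap by (simp add: divide_le_eq)
    then have "(\<Sum>j\<in>J. \<bar>u j + w j\<bar> powr q) powr (1/q) \<le> ((a + b) powr q) powr (1/q)"
      using q0 by (intro powr_mono2) (auto simp: sum_nonneg)
    also have "\<dots> = a + b" using ap q0 by (simp add: powr_powr)
    finally show ?thesis unfolding lq_norm_on_def a_def b_def by simp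
  qed
qed


lemma coh_bound:
  fixes b :: "nat \<Rightarrow> nat \<Rightarrow> 'a::euclidean_space"
  assumes "x \<in> blk_subspace b m i" "z \<in> blk_subspace b m j"
  shows "\<bar>x \<bullet> z\<bar> \<le> sub_coh b m i j * norm x * norm z"
proof (cases "x = 0 \<or> z = 0")
  case True then show ?thesis by auto
next
  case False
  define X where "X = {\<bar>x \<bullet> z\<bar> / (norm x * norm z) | x z.
      x \<in> blk_subspace b m i \<and> x \<noteq> 0 \<and> z \<in> blk_subspace b m j \<and> z \<noteq> 0}"
  have bdd: "bdd_above X"
  proof (rule bdd_aboveI[of _ 1])
    fix r assume "r \<in> X"
    then obtain x' z' :: 'a where r: "r = \<bar>x' \<bullet> z'\<bar> / (norm x' * norm z')" "x' \<noteq> 0" "z' \<noteq> 0"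
      unfolding X_def by auto
    have "\<bar>x' \<bullet> z'\<bar> \<le> norm x' * norm z'" by (rule Cauchy_Schwarz_ineq2)
    then show "r \<le> 1" using r by (simp add: divide_le_eq)
  qed
  have "\<bar>x \<bullet> z\<bar> / (norm x * norm z) \<in> X" using assms False unfolding X_def by blast
  then have "\<bar>x \<bullet> z\<bar> / (norm x * norm z) \<le> Sup X" using bdd by (rule cSup_upper)
  then have "\<bar>x \<bullet> z\<bar> / (norm x * norm z) \<le> sub_coh b m i j" unfolding sub_coh_def X_def by simp
  then show ?thesis using False by (simp add: divide_le_eq mult.assoc)
qed

lemma coh_nonneg:
  assumes "x \<in> blk_subspace b m i" "x \<noteq> 0" "z \<in> blk_subspace b m j" "z \<noteq> 0"
  shows "0 \<le> sub_coh b m i j"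
proof -
  have "\<bar>x \<bullet> z\<bar> \<le> sub_coh b m i j * norm x * norm z" using coh_bound assms by blast
  moreover have "0 < norm x * norm z" using assms by simp
  ultimately show ?thesis
    by (metis abs_ge_zero dual_order.trans mult.assoc zero_le_mult_iff linorder_not_le)
qed

lemma col_in: "j < m i \<Longrightarrow> b i j \<in> blk_subspace b m i"
  unfolding blk_subspace_def by (rule span_base) blast

lemma rep_J:
  fixes b :: "nat \<Rightarrow> nat \<Rightarrow> 'a::euclidean_space"
  assumes J: "J \<subseteq> {..<m i}" "card J = dim (blk_subspace b m i)"
    and ind: "\<forall>c. (\<Sum>j\<in>J. c j *\<^sub>R b i j) = 0 \<longrightarrow> (\<forall>j\<in>J. c j = 0)"
    and s: "s \<in> blk_subspace b m i"
  shows "\<exists>a. s = (\<Sum>j\<in>J. a j *\<^sub>R b i j)"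
proof -
  have fin: "finite J" using J finite_subset by blast
  have inj: "inj_on (b i) J"
  proof (rule inj_onI, rule ccontr)
    fix j1 j2 assume j: "j1 \<in> J" "j2 \<in> J" "b i j1 = b i j2" "j1 \<noteq> j2"
    define c where "c j = (if j = j1 then 1 else 0) - (if j = j2 then 1 else (0::real))" for j
    have "(\<Sum>j\<in>J. c j *\<^sub>R b i j) = (\<Sum>j\<in>J. (if j = j1 then b i j else 0) - (if j = j2 then b i j else 0))"
      unfolding c_def by (intro sum.cong refl) (auto simp: scaleR_left_diff_distrib)
    also have "\<dots> = b i j1 - b i j2" using j fin by (simp add: sum_subtractf)
    also have "\<dots> = 0" using j by simp
    finally have "c j1 = 0" using ind j by blast
    then show False using j unfolding c_def by simp
  qed
  have indep: "independent (b i ` J)"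
  proof
    assume "dependent (b i ` J)"
    then obtain u where u: "\<exists>v\<in>b i ` J. u v \<noteq> 0" "(\<Sum>v\<in>b i ` J. u v *\<^sub>R v) = 0"
      using dependent_finite[of "b i ` J"] fin by auto
    have "(\<Sum>j\<in>J. u (b i j) *\<^sub>R b i j) = 0" using u(2) sum.reindex[OF inj, of "\<lambda>v. u v *\<^sub>R v"] by simp
    then have "\<forall>j\<in>J. u (b i j) = 0" using ind[rule_format, of "\<lambda>j. u (b i j)"] by simp
    then show False using u(1) by auto
  qed
  have sub: "b i ` J \<subseteq> blk_subspace b m i" using J col_in by blast
  have "card (b i ` J) = dim (blk_subspace b m i)" using card_image[OF inj] J by simp
  then have "blk_subspace b m i \<subseteq> span (b i ` J)"
    using card_eq_dim[OF sub] indep fin by simp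
  then have "s \<in> span (b i ` J)" using s by blast
  then obtain u where "s = (\<Sum>v\<in>b i ` J. u v *\<^sub>R v)" using span_finite[of "b i ` J"] fin by auto
  then have "s = (\<Sum>j\<in>J. u (b i j) *\<^sub>R b i j)" using sum.reindex[OF inj, of "\<lambda>v. u v *\<^sub>R v"] by simp
  then show ?thesis by (rule_tac x="\<lambda>j. u (b i j)" in exI) simp
qed

lemma intra_rep:
  fixes b :: "nat \<Rightarrow> nat \<Rightarrow> 'a::euclidean_space"
  assumes ok: "intra_rip_ok q b m n e" and i: "i < n" and s: "s \<in> blk_subspace b m i"
  shows "\<exists>a. s = (\<Sum>j<m i. a j *\<^sub>R b i j) \<and> (1 - e) * (lq_norm q (m i) a)\<^sup>2 \<le> (norm s)\<^sup>2"
proof -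
  have ex: "\<exists>J. J \<subseteq> {..<m i} \<and> card J = dim (blk_subspace b m i) \<and>
      (\<forall>c. (\<Sum>j\<in>J. c j *\<^sub>R b i j) = 0 \<longrightarrow> (\<forall>j\<in>J. c j = 0)) \<and>
      (\<forall>c. (1 - e) * (lq_norm_on q J c)\<^sup>2 \<le> (norm (\<Sum>j\<in>J. c j *\<^sub>R b i j))\<^sup>2 \<and>
           (norm (\<Sum>j\<in>J. c j *\<^sub>R b i j))\<^sup>2 \<le> (1 + e) * (lq_norm_on q J c)\<^sup>2)"
    using ok i unfolding intra_rip_ok_def by (elim allE impE)
  then obtain J where J: "J \<subseteq> {..<m i}" "card J = dim (blk_subspace b m i)"
    and ind: "\<forall>c. (\<Sum>j\<in>J. c j *\<^sub>R b i j) = 0 \<longrightarrow> (\<forall>j\<in>J. c j = 0)"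
    and rip0: "\<forall>c. (1 - e) * (lq_norm_on q J c)\<^sup>2 \<le> (norm (\<Sum>j\<in>J. c j *\<^sub>R b i j))\<^sup>2 \<and>
           (norm (\<Sum>j\<in>J. c j *\<^sub>R b i j))\<^sup>2 \<le> (1 + e) * (lq_norm_on q J c)\<^sup>2"
    by (elim exE conjE)
  have rip: "\<forall>c. (1 - e) * (lq_norm_on q J c)\<^sup>2 \<le> (norm (\<Sum>j\<in>J. c j *\<^sub>R b i j))\<^sup>2"
    using rip0 by simp
  obtain a0 where a0: "s = (\<Sum>j\<in>J. a0 j *\<^sub>R b i j)" using rep_J[OF J ind s] by blast
  define a where "a j = (if j \<in> J then a0 j else 0)" for j
  have JJ: "{..<m i} \<inter> J = J" using J by blast
  have e1: "(\<Sum>j<m i. a j *\<^sub>R b i j) = s"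
  proof -
    have "(\<Sum>j<m i. a j *\<^sub>R b i j) = (\<Sum>j<m i. if j \<in> J then a0 j *\<^sub>R b i j else 0)"
      unfolding a_def by (rule sum.cong) auto
    also have "\<dots> = (\<Sum>j\<in>{..<m i} \<inter> J. a0 j *\<^sub>R b i j)" by (simp add: sum.inter_restrict)
    finally show ?thesis using JJ a0 by simp
  qed
  have e2: "(\<Sum>j\<in>J. a j *\<^sub>R b i j) = s" unfolding a0 a_def by (rule sum.cong) auto
  have e3: "lq_norm q (m i) a = lq_norm_on q J a"
  proof -
    have "(\<Sum>j<m i. \<bar>a j\<bar> powr q) = (\<Sum>j<m i. if j \<in> J then \<bar>a j\<bar> powr q else 0)"
      unfolding a_def by (rule sum.cong) auto
    also have "\<dots> = (\<Sum>j\<in>{..<m i} \<inter> J. \<bar>a j\<bar> powr q)" by (simp add: sum.inter_restrict)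
    finally show ?thesis using JJ unfolding lq_norm_def lq_norm_on_def by simp
  qed
  have "(1 - e) * (lq_norm q (m i) a)\<^sup>2 \<le> (norm s)\<^sup>2"
    using rip[rule_format, of a] unfolding e2 e3 .
  then show ?thesis using e1 by auto
qed


lemma norm_block:
  fixes b :: "nat \<Rightarrow> nat \<Rightarrow> 'a::euclidean_space"
  assumes "\<forall>j\<in>J. norm (b i j) = 1"
  shows "norm (\<Sum>j\<in>J. c j *\<^sub>R b i j) \<le> (\<Sum>j\<in>J. \<bar>c j\<bar>)"
proof -
  have "norm (\<Sum>j\<in>J. c j *\<^sub>R b i j) \<le> (\<Sum>j\<in>J. norm (c j *\<^sub>R b i j))" by (rule norm_sum)
  also have "\<dots> = (\<Sum>j\<in>J. \<bar>c j\<bar>)" using assms by (intro sum.cong) auto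
  finally show ?thesis .
qed

lemma sum_abs_le_card:
  assumes "finite J" "q > 0"
  shows "(\<Sum>j\<in>J. \<bar>c j\<bar>) \<le> real (card J) * lq_norm_on q J c"
proof -
  have "(\<Sum>j\<in>J. \<bar>c j\<bar>) \<le> (\<Sum>j\<in>J. lq_norm_on q J c)"
    using assms by (intro sum_mono lq_coord) auto
  then show ?thesis by simp
qed

lemma block_bound:
  fixes b :: "nat \<Rightarrow> nat \<Rightarrow> 'a::euclidean_space"
  assumes q: "q \<ge> 1" and unit: "\<forall>j\<in>J. norm (b i j) = 1" and J: "finite J" "card J \<le> M"
  shows "(norm (\<Sum>j\<in>J. c j *\<^sub>R b i j))\<^sup>2 \<le> (1 + real M ^ 2) * (lq_norm_on q J c)\<^sup>2"
proof -
  have "norm (\<Sum>j\<in>J. c j *\<^sub>R b i j) \<le> real (card J) * lq_norm_on q J c"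
    using norm_block[where J=J and b=b and i=i and c=c, OF unit] sum_abs_le_card[OF J(1), of q c] q by linarith
  also have "\<dots> \<le> real M * lq_norm_on q J c" using J by (intro mult_right_mono) (auto simp: lq_nonneg)
  finally have "(norm (\<Sum>j\<in>J. c j *\<^sub>R b i j))\<^sup>2 \<le> (real M * lq_norm_on q J c)\<^sup>2"
    by (intro power_mono) auto
  also have "\<dots> = real M ^ 2 * (lq_norm_on q J c)\<^sup>2" by (simp add: power_mult_distrib)
  also have "\<dots> \<le> (1 + real M ^ 2) * (lq_norm_on q J c)\<^sup>2" by (intro mult_right_mono) auto
  finally show ?thesis .
qed

lemma upper_ne:
  fixes b :: "nat \<Rightarrow> nat \<Rightarrow> 'a::euclidean_space"
  assumes q: "q \<ge> 1" and unit: "\<forall>i<n. \<forall>j<m i. norm (b i j) = 1"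
  shows "real (\<Sum>i<n. m i) ^ 2 \<in> {s. \<forall>i<n. \<forall>c.
      (norm (\<Sum>j<m i. c j *\<^sub>R b i j))\<^sup>2 \<le> (1 + s) * (lq_norm q (m i) c)\<^sup>2}"
proof (clarify)
  fix i c assume i: "i < n"
  have "m i \<le> (\<Sum>i<n. m i)" using i by (intro member_le_sum) auto
  then show "(norm (\<Sum>j<m i. c j *\<^sub>R b i j))\<^sup>2 \<le> (1 + real (\<Sum>i<n. m i) ^ 2) * (lq_norm q (m i) c)\<^sup>2"
    using block_bound[OF q, of "{..<m i}" b i "\<Sum>i<n. m i" c] unit i by (simp add: lq_eq)
qed

lemma upper_bound:
  fixes b :: "nat \<Rightarrow> nat \<Rightarrow> 'a::euclidean_space"
  assumes q: "q \<ge> 1" and unit: "\<forall>i<n. \<forall>j<m i. norm (b i j) = 1" and i: "i < n"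
  shows "(norm (\<Sum>j<m i. c j *\<^sub>R b i j))\<^sup>2 \<le> (1 + upper_intra_rip q b m n) * (lq_norm q (m i) c)\<^sup>2"
proof -
  define X where "X = {s. \<forall>i<n. \<forall>c.
      (norm (\<Sum>j<m i. c j *\<^sub>R b i j))\<^sup>2 \<le> (1 + s) * (lq_norm q (m i) c)\<^sup>2}"
  have ne: "X \<noteq> {}" using upper_ne[OF q unit] unfolding X_def by blast
  show ?thesis
  proof (cases "lq_norm q (m i) c = 0")
    case True
    then have "\<forall>j<m i. c j = 0" using lq_zero[of "{..<m i}" q c] q by (simp add: lq_eq)
    then have "(\<Sum>j<m i. c j *\<^sub>R b i j) = 0" by simp
    then show ?thesis using True by simp
  next
    case False
    then have pos: "(lq_norm q (m i) c)\<^sup>2 > 0" by simp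
    define t where "t = (norm (\<Sum>j<m i. c j *\<^sub>R b i j))\<^sup>2 / (lq_norm q (m i) c)\<^sup>2 - 1"
    have "t \<le> Inf X"
    proof (rule cInf_greatest[OF ne])
      fix s assume "s \<in> X"
      then have "(norm (\<Sum>j<m i. c j *\<^sub>R b i j))\<^sup>2 \<le> (1 + s) * (lq_norm q (m i) c)\<^sup>2"
        unfolding X_def using i by blast
      then have "(norm (\<Sum>j<m i. c j *\<^sub>R b i j))\<^sup>2 / (lq_norm q (m i) c)\<^sup>2 \<le> 1 + s"
        by (subst pos_divide_le_eq[OF pos])
      then show "t \<le> s" unfolding t_def by linarith
    qed
    then have "t \<le> upper_intra_rip q b m n" unfolding upper_intra_rip_def X_def by simp
    then have "(norm (\<Sum>j<m i. c j *\<^sub>R b i j))\<^sup>2 / (lq_norm q (m i) c)\<^sup>2 \<le> 1 + upper_intra_rip q b m n"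
      unfolding t_def by linarith
    then show ?thesis by (subst (asm) pos_divide_le_eq[OF pos])
  qed
qed

lemma upper_nonneg:
  fixes b :: "nat \<Rightarrow> nat \<Rightarrow> 'a::euclidean_space"
  assumes q: "q \<ge> 1" and unit: "\<forall>i<n. \<forall>j<m i. norm (b i j) = 1" and n: "0 < n" and m0: "0 < m 0"
  shows "0 \<le> upper_intra_rip q b m n"
proof -
  define X where "X = {s. \<forall>i<n. \<forall>c.
      (norm (\<Sum>j<m i. c j *\<^sub>R b i j))\<^sup>2 \<le> (1 + s) * (lq_norm q (m i) c)\<^sup>2}"
  have ne: "X \<noteq> {}" using upper_ne[OF q unit] unfolding X_def by blast
  define c0 where "c0 j = (if 0 = j then 1 else (0::real))" for j :: nat
  have "(\<Sum>j<m 0. c0 j *\<^sub>R b 0 j) = (\<Sum>j<m 0. if 0 = j then b 0 j else 0)"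
    by (rule sum.cong) (auto simp: c0_def)
  also have "\<dots> = b 0 0" using m0 by simp
  finally have e1: "(\<Sum>j<m 0. c0 j *\<^sub>R b 0 j) = b 0 0" .
  have e2: "lq_norm q (m 0) c0 = 1"
  proof -
    have "(\<Sum>j<m 0. \<bar>c0 j\<bar> powr q) = (\<Sum>j<m 0. if 0 = j then 1 else 0)"
      using q by (intro sum.cong) (auto simp: c0_def)
    also have "\<dots> = 1" using m0 by simp
    finally have "(\<Sum>j<m 0. \<bar>c0 j\<bar> powr q) = 1" .
    then show ?thesis unfolding lq_norm_def by simp
  qed
  have "0 \<le> Inf X"
  proof (rule cInf_greatest[OF ne])
    fix s assume "s \<in> X"
    then have "(norm (\<Sum>j<m 0. c0 j *\<^sub>R b 0 j))\<^sup>2 \<le> (1 + s) * (lq_norm q (m 0) c0)\<^sup>2"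
      unfolding X_def using n by blast
    then show "0 \<le> s" using e1 e2 unit n m0 by simp
  qed
  then show ?thesis unfolding upper_intra_rip_def X_def by simp
qed


lemma intra_ne:
  fixes b :: "nat \<Rightarrow> nat \<Rightarrow> 'a::euclidean_space"
  assumes q: "q \<ge> 1" and unit: "\<forall>i<n. \<forall>j<m i. norm (b i j) = 1"
  shows "intra_rip_ok q b m n (1 + real (\<Sum>i<n. m i) ^ 2)"
  unfolding intra_rip_ok_def
proof (intro allI impI)
  fix i assume i: "i < n"
  define V where "V = b i ` {..<m i}"
  have SV: "blk_subspace b m i = span V" unfolding blk_subspace_def V_def
    by (rule arg_cong[where f=span]) auto
  obtain B where B: "B \<subseteq> V" "independent B" "V \<subseteq> span B"
    using maximal_independent_subset[of V] by blast
  have finB: "finite B" using B(1) V_def finite_subset by blast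
  define J where "J = inv_into {..<m i} (b i) ` B"
  have Jsub: "J \<subseteq> {..<m i}"
  proof
    fix j assume "j \<in> J"
    then obtain v where v: "v \<in> B" "j = inv_into {..<m i} (b i) v" unfolding J_def by blast
    then have "v \<in> b i ` {..<m i}" using B(1) V_def by blast
    from inv_into_into[OF this] show "j \<in> {..<m i}" using v(2) by simp
  qed
  have imJ: "b i ` J = B" unfolding J_def using B(1) V_def
    by (auto simp: image_image f_inv_into_f intro!: image_eqI)
  have injinv: "inj_on (inv_into {..<m i} (b i)) B" using B(1) V_def by (intro inj_on_inv_into) auto
  have cardJ: "card J = card B" unfolding J_def using card_image[OF injinv] .
  have injJ: "inj_on (b i) J"
  proof (rule inj_onI)
    fix j1 j2 assume "j1 \<in> J" "j2 \<in> J" "b i j1 = b i j2"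
    then show "j1 = j2" unfolding J_def using B(1) V_def by (auto, metis f_inv_into_f subsetD)
  qed
  have "span V = span B" using B by (metis span_mono span_span subset_antisym span_subspace subspace_span)
  then have dimeq: "dim (blk_subspace b m i) = card J"
    using SV cardJ dim_span_eq_card_independent[OF B(2)] by simp
  have ind: "\<forall>c. (\<Sum>j\<in>J. c j *\<^sub>R b i j) = 0 \<longrightarrow> (\<forall>j\<in>J. c j = 0)"
  proof (intro allI impI ballI, rule ccontr)
    fix c j assume z: "(\<Sum>j\<in>J. c j *\<^sub>R b i j) = 0" and j: "j \<in> J" and nz: "c j \<noteq> 0"
    define u where "u v = c (inv_into J (b i) v)" for v
    have "(\<Sum>v\<in>B. u v *\<^sub>R v) = (\<Sum>j\<in>J. u (b i j) *\<^sub>R b i j)"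
      unfolding imJ[symmetric] by (simp add: sum.reindex[OF injJ])
    also have "\<dots> = (\<Sum>j\<in>J. c j *\<^sub>R b i j)" unfolding u_def using injJ
      by (intro sum.cong) (auto simp: inv_into_f_f)
    finally have "(\<Sum>v\<in>B. u v *\<^sub>R v) = 0" using z by simp
    moreover have "u (b i j) \<noteq> 0" unfolding u_def using injJ j nz by (simp add: inv_into_f_f)
    moreover have "b i j \<in> B" using imJ j by blast
    ultimately have "dependent B" using dependent_finite[OF finB] by blast
    then show False using B(2) by simp
  qed
  have finJ: "finite J" using Jsub finite_subset by blast
  have cJ: "card J \<le> (\<Sum>i<n. m i)"
  proof -
    have "card J \<le> m i" using card_mono[OF _ Jsub] by simp
    also have "\<dots> \<le> (\<Sum>i<n. m i)" using i by (intro member_le_sum) auto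
    finally show ?thesis .
  qed
  have unitJ: "\<forall>j\<in>J. norm (b i j) = 1" using unit i Jsub by auto
  show "\<exists>J. J \<subseteq> {..<m i} \<and> card J = dim (blk_subspace b m i) \<and>
      (\<forall>c. (\<Sum>j\<in>J. c j *\<^sub>R b i j) = 0 \<longrightarrow> (\<forall>j\<in>J. c j = 0)) \<and>
      (\<forall>c. (1 - (1 + real (\<Sum>i<n. m i) ^ 2)) * (lq_norm_on q J c)\<^sup>2 \<le> (norm (\<Sum>j\<in>J. c j *\<^sub>R b i j))\<^sup>2 \<and>
           (norm (\<Sum>j\<in>J. c j *\<^sub>R b i j))\<^sup>2 \<le> (1 + (1 + real (\<Sum>i<n. m i) ^ 2)) * (lq_norm_on q J c)\<^sup>2)"
  proof (intro exI[of _ J] conjI allI)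
    fix c
    show "(1 - (1 + real (\<Sum>i<n. m i) ^ 2)) * (lq_norm_on q J c)\<^sup>2 \<le> (norm (\<Sum>j\<in>J. c j *\<^sub>R b i j))\<^sup>2"
      by (rule order.trans[of _ 0]) (auto intro: mult_nonpos_nonneg)
    have "(norm (\<Sum>j\<in>J. c j *\<^sub>R b i j))\<^sup>2 \<le> (1 + real (\<Sum>i<n. m i) ^ 2) * (lq_norm_on q J c)\<^sup>2"
      by (rule block_bound[where b=b and i=i and J=J, OF q unitJ finJ cJ])
    also have "\<dots> \<le> (1 + (1 + real (\<Sum>i<n. m i) ^ 2)) * (lq_norm_on q J c)\<^sup>2"
      by (intro mult_right_mono) auto
    finally show "(norm (\<Sum>j\<in>J. c j *\<^sub>R b i j))\<^sup>2 \<le> (1 + (1 + real (\<Sum>i<n. m i) ^ 2)) * (lq_norm_on q J c)\<^sup>2" .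
  qed (use Jsub dimeq ind in auto)
qed

lemma intra_ok_nonneg:
  fixes b :: "nat \<Rightarrow> nat \<Rightarrow> 'a::euclidean_space"
  assumes ok: "intra_rip_ok q b m n e" and q: "q \<ge> 1" and unit: "\<forall>i<n. \<forall>j<m i. norm (b i j) = 1"
    and n: "0 < n" and m0: "0 < m 0"
  shows "0 \<le> e"
proof -
  have ex: "\<exists>J. J \<subseteq> {..<m 0} \<and> card J = dim (blk_subspace b m 0) \<and>
      (\<forall>c. (\<Sum>j\<in>J. c j *\<^sub>R b 0 j) = 0 \<longrightarrow> (\<forall>j\<in>J. c j = 0)) \<and>
      (\<forall>c. (1 - e) * (lq_norm_on q J c)\<^sup>2 \<le> (norm (\<Sum>j\<in>J. c j *\<^sub>R b 0 j))\<^sup>2 \<and>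
           (norm (\<Sum>j\<in>J. c j *\<^sub>R b 0 j))\<^sup>2 \<le> (1 + e) * (lq_norm_on q J c)\<^sup>2)"
    using ok n unfolding intra_rip_ok_def by (elim allE impE)
  then obtain J where J: "J \<subseteq> {..<m 0}" "card J = dim (blk_subspace b m 0)"
    and rip0: "\<forall>c. (1 - e) * (lq_norm_on q J c)\<^sup>2 \<le> (norm (\<Sum>j\<in>J. c j *\<^sub>R b 0 j))\<^sup>2 \<and>
           (norm (\<Sum>j\<in>J. c j *\<^sub>R b 0 j))\<^sup>2 \<le> (1 + e) * (lq_norm_on q J c)\<^sup>2"
    by (elim exE conjE)
  have finJ: "finite J" using J finite_subset by blast
  have "b 0 0 \<in> blk_subspace b m 0" using col_in m0 by blast
  moreover have "b 0 0 \<noteq> 0" using unit n m0 by fastforce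
  ultimately have "dim (blk_subspace b m 0) \<noteq> 0" using dim_eq_0 by blast
  then have "J \<noteq> {}" using J(2) by auto
  then obtain j0 where j0: "j0 \<in> J" by blast
  define c0 where "c0 j = (if j0 = j then 1 else (0::real))" for j :: nat
  have "(\<Sum>j\<in>J. c0 j *\<^sub>R b 0 j) = (\<Sum>j\<in>J. if j0 = j then b 0 j else 0)"
    by (rule sum.cong) (auto simp: c0_def)
  also have "\<dots> = b 0 j0" using j0 finJ by simp
  finally have e1: "(\<Sum>j\<in>J. c0 j *\<^sub>R b 0 j) = b 0 j0" .
  have "(\<Sum>j\<in>J. \<bar>c0 j\<bar> powr q) = (\<Sum>j\<in>J. if j0 = j then 1 else 0)"
    using q by (intro sum.cong) (auto simp: c0_def)
  also have "\<dots> = 1" using j0 finJ by simp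
  finally have e2: "lq_norm_on q J c0 = 1" unfolding lq_norm_on_def by simp
  have "norm (b 0 j0) = 1" using unit n J j0 by auto
  then show ?thesis using rip0[rule_format, of c0] e1 e2 by simp
qed

lemma intra_inf:
  fixes b :: "nat \<Rightarrow> nat \<Rightarrow> 'a::euclidean_space"
  assumes q: "q \<ge> 1" and unit: "\<forall>i<n. \<forall>j<m i. norm (b i j) = 1"
    and H: "\<And>e. intra_rip_ok q b m n e \<Longrightarrow> t \<le> e"
  shows "t \<le> intra_rip q b m n"
  unfolding intra_rip_def using intra_ne[OF q unit] H by (intro cInf_greatest) auto

lemma intra_rip_nonneg:
  fixes b :: "nat \<Rightarrow> nat \<Rightarrow> 'a::euclidean_space"
  assumes q: "q \<ge> 1" and unit: "\<forall>i<n. \<forall>j<m i. norm (b i j) = 1"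
    and n: "0 < n" and m0: "0 < m 0"
  shows "0 \<le> intra_rip q b m n"
  using intra_inf[OF q unit] intra_ok_nonneg[OF _ q unit n m0] by blast


lemma cum_le:
  assumes L: "L \<subseteq> {..<n}" "card L = k" and l: "l < n" "l \<notin> L"
  shows "(\<Sum>j\<in>L. sub_coh b m l j) \<le> cum_coh b m n k"
proof (cases "k = 0")
  case True
  have "finite L" using L finite_subset by blast
  then have "L = {}" using True L by simp
  then show ?thesis using True unfolding cum_coh_def by simp
next
  case False
  define X where "X = {\<Sum>j\<in>L. sub_coh b m i j | L i. L \<subseteq> {..<n} \<and> card L = k \<and> i < n \<and> i \<notin> L}"
  have "X \<subseteq> (\<lambda>(L, i). \<Sum>j\<in>L. sub_coh b m i j) ` (Pow {..<n} \<times> {..<n})"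
    unfolding X_def by auto
  then have fin: "finite X" by (rule finite_subset) auto
  have "(\<Sum>j\<in>L. sub_coh b m l j) \<in> X" unfolding X_def using L l by blast
  then have "(\<Sum>j\<in>L. sub_coh b m l j) \<le> Max X" using fin by (rule Max_ge[rotated])
  then show ?thesis using False unfolding cum_coh_def X_def by simp
qed

lemma final_alg:
  fixes eps sig z z' :: real
  assumes "0 \<le> eps" "0 \<le> sig" "0 \<le> z" "0 \<le> z'"
    and c: "sqrt ((1 + sig) / (1 + eps)) * z + z' < (1 - eps) / (1 + eps)"
  shows "z' < 1" "(z * sqrt (1 + sig))\<^sup>2 < (1 - eps) * (1 - z')\<^sup>2"
proof -
  define u where "u = (1 - eps) / (1 + eps)"
  have u1: "u \<le> 1" unfolding u_def using assms by (simp add: divide_le_eq)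
  have r0: "0 \<le> sqrt ((1 + sig) / (1 + eps)) * z" using assms by simp
  have zu: "z' < u" using c r0 unfolding u_def by linarith
  then show "z' < 1" using u1 by simp
  have upos: "0 < u" using zu assms by simp
  have e1: "eps < 1" using upos assms unfolding u_def by (simp add: zero_less_divide_iff)
  have "(sqrt ((1 + sig) / (1 + eps)) * z)\<^sup>2 < (u - z')\<^sup>2"
    using c r0 unfolding u_def[symmetric] by (intro power_strict_mono) auto
  then have h1: "(1 + sig) / (1 + eps) * z\<^sup>2 < (u - z')\<^sup>2" using assms by (simp add: power_mult_distrib)
  have "u * z' \<le> z'" using u1 assms mult_right_mono[of u 1 z'] by simp
  then have "u - z' \<le> u * (1 - z')" by (simp add: algebra_simps)
  then have "(u - z')\<^sup>2 \<le> (u * (1 - z'))\<^sup>2" using zu by (intro power_mono) auto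
  then have h2: "(u - z')\<^sup>2 \<le> u\<^sup>2 * (1 - z')\<^sup>2" by (simp add: power_mult_distrib)
  have ne: "(1 + eps) * u = 1 - eps" unfolding u_def using assms by simp
  have "(1 + eps) * u\<^sup>2 = ((1 + eps) * u) * u" by (simp add: power2_eq_square mult.assoc)
  also have "\<dots> = (1 - eps) * u" using ne by simp
  finally have "(1 + eps) * u\<^sup>2 = (1 - eps) * u" .
  also have "\<dots> \<le> 1 - eps" using u1 e1 by (simp add: mult_left_le_one_le)
  finally have h3: "(1 + eps) * u\<^sup>2 \<le> 1 - eps" .
  have "(z * sqrt (1 + sig))\<^sup>2 = (1 + sig) * z\<^sup>2" using assms by (simp add: power_mult_distrib)
  also have "\<dots> = (1 + eps) * ((1 + sig) / (1 + eps) * z\<^sup>2)" using assms by simp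
  also have "\<dots> < (1 + eps) * (u\<^sup>2 * (1 - z')\<^sup>2)"
    using h1 h2 assms by (intro mult_strict_left_mono) auto
  also have "\<dots> = ((1 + eps) * u\<^sup>2) * (1 - z')\<^sup>2" by simp
  also have "\<dots> \<le> (1 - eps) * (1 - z')\<^sup>2" using h3 by (intro mult_right_mono) auto
  finally show "(z * sqrt (1 + sig))\<^sup>2 < (1 - eps) * (1 - z')\<^sup>2" .
qed


lemma sum_minus_if:
  assumes "finite L"
  shows "(\<Sum>j\<in>L-{i}. f j) = (\<Sum>j\<in>L. if j = i then 0 else f j)"
  by (rule sum.mono_neutral_cong_left) (use assms in auto)

lemma Bc_in: "(\<Sum>j<m i. c j *\<^sub>R b i j) \<in> blk_subspace b m i"
  unfolding blk_subspace_def by (rule span_sum, rule span_scale, rule span_base) auto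

lemma lq_zero_fun: "lq_norm q mm (\<lambda>j. 0) = 0"
  unfolding lq_norm_def by simp

theorem proposition3:
  fixes b :: "nat \<Rightarrow> nat \<Rightarrow> 'a::euclidean_space" and m :: "nat \<Rightarrow> nat" and n k :: nat and q :: real
  assumes q: "q \<ge> 1"
    and k: "0 < k" "k < n"
    and blocks_nonempty: "\<forall>i<n. 0 < m i"
    and unit_cols: "\<forall>i<n. \<forall>j<m i. norm (b i j) = 1"
    and indep: "\<forall>i<n. \<forall>i'<n. i \<noteq> i' \<longrightarrow> blk_subspace b m i \<inter> blk_subspace b m i' = {0}"
    and uniq: "unique_block_sparse b m n k"
    and cond: "sqrt ((1 + upper_intra_rip q b m n) / (1 + intra_rip q b m n)) * cum_coh b m n k
               + cum_coh b m n (k - 1) < (1 - intra_rip q b m n) / (1 + intra_rip q b m n)"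
  shows "\<forall>L. L \<subseteq> {..<n} \<and> card L = k \<longrightarrow>
           (\<forall>y x. (\<forall>i\<in>L. x i \<in> blk_subspace b m i) \<and> y = (\<Sum>i\<in>L. x i) \<longrightarrow>
              (\<forall>c. optimal_lq_l1 q b m n y c \<longrightarrow> (\<forall>i<n. i \<notin> L \<longrightarrow> (\<forall>j<m i. c i j = 0))))"
proof (intro allI impI)
  fix L y x c l0 j0
  assume L: "L \<subseteq> {..<n} \<and> card L = k"
    and yx: "(\<forall>i\<in>L. x i \<in> blk_subspace b m i) \<and> y = (\<Sum>i\<in>L. x i)"
    and opt: "optimal_lq_l1 q b m n y c" and l0: "l0 < n" "l0 \<notin> L" and j0: "j0 < m l0"
  show "c l0 j0 = 0"
  proof (rule ccontr)
    assume nz: "c l0 j0 \<noteq> 0"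
    have Lsub: "L \<subseteq> {..<n}" and cardL: "card L = k" using L by auto
    have finL: "finite L" using Lsub finite_subset by blast
    have xin: "\<forall>i\<in>L. x i \<in> blk_subspace b m i" and ydef: "y = (\<Sum>i\<in>L. x i)" using yx by auto
    have yc: "y = dict_mult b m n c"
      and optc: "\<forall>c'. y = dict_mult b m n c' \<longrightarrow> mixed_norm q m n c \<le> mixed_norm q m n c'"
      using opt unfolding optimal_lq_l1_def by auto
    have q0: "q > 0" using q by simp
    have n0: "0 < n" using k by simp
    have m0: "0 < m 0" using blocks_nonempty n0 by simp
    define N where "N i = lq_norm q (m i) (c i)" for i
    define Bc where "Bc i = (\<Sum>j<m i. c i j *\<^sub>R b i j)" for i
    define R where "R = {..<n} - L"
    define C where "C = (\<Sum>l\<in>R. N l)"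
    define sig where "sig = upper_intra_rip q b m n"
    define eps where "eps = intra_rip q b m n"
    define z where "z = cum_coh b m n k"
    define z' where "z' = cum_coh b m n (k - 1)"
    define mu where "mu i j = sub_coh b m i j" for i j
    have Nnn: "\<And>i. 0 \<le> N i" unfolding N_def lq_eq by (rule lq_nonneg)
    have finR: "finite R" unfolding R_def by simp
    have l0R: "l0 \<in> R" using l0 unfolding R_def by simp
    have Nl0: "0 < N l0"
    proof -
      have "N l0 \<noteq> 0"
      proof
        assume "N l0 = 0"
        then have "c l0 j0 = 0" using lq_zero[of "{..<m l0}" q "c l0" j0] q0 j0 unfolding N_def lq_eq by simp
        with nz show False ..
      qed
      then show ?thesis using Nnn[of l0] by linarith
    qed
    have Cpos: "0 < C"
      using member_le_sum[of l0 R N] finR l0R Nnn Nl0 unfolding C_def by fastforce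
    have Bcin: "\<And>i. Bc i \<in> blk_subspace b m i" unfolding Bc_def by (rule Bc_in)
    have nzc: "\<And>i. i < n \<Longrightarrow> b i 0 \<in> blk_subspace b m i \<and> b i 0 \<noteq> 0"
    proof -
      fix i assume i: "i < n"
      then have "0 < m i" using blocks_nonempty by simp
      then show "b i 0 \<in> blk_subspace b m i \<and> b i 0 \<noteq> 0" using col_in unit_cols i by fastforce
    qed
    have mu_nn: "\<And>i j. i < n \<Longrightarrow> j < n \<Longrightarrow> 0 \<le> mu i j"
      unfolding mu_def using nzc coh_nonneg by blast
    have sig_nn: "0 \<le> sig" unfolding sig_def by (rule upper_nonneg[OF q unit_cols n0 m0])
    have eps_nn: "0 \<le> eps" unfolding eps_def by (rule intra_rip_nonneg[OF q unit_cols n0 m0])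
    have hBc: "\<And>l. l < n \<Longrightarrow> norm (Bc l) \<le> sqrt (1 + sig) * N l"
    proof -
      fix l assume l: "l < n"
      have "(norm (Bc l))\<^sup>2 \<le> (1 + sig) * (N l)\<^sup>2"
        unfolding Bc_def N_def sig_def by (rule upper_bound[OF q unit_cols l])
      then have "sqrt ((norm (Bc l))\<^sup>2) \<le> sqrt ((1 + sig) * (N l)\<^sup>2)" by (rule real_sqrt_le_mono)
      then show "norm (Bc l) \<le> sqrt (1 + sig) * N l" using Nnn[of l] by (simp add: real_sqrt_mult)
    qed
    define s where "s i = x i - Bc i" for i
    have s_in: "\<forall>i\<in>L. s i \<in> blk_subspace b m i"
      unfolding s_def blk_subspace_def using xin Bcin unfolding blk_subspace_def by (auto intro: span_diff)
    have ysplit: "dict_mult b m n c = (\<Sum>i\<in>L. Bc i) + (\<Sum>l\<in>R. Bc l)"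
      unfolding dict_mult_def Bc_def[symmetric] R_def
      using sum.subset_diff[OF Lsub, of Bc] by (simp add: add.commute)
    have zdef: "(\<Sum>l\<in>R. Bc l) = (\<Sum>i\<in>L. s i)"
    proof -
      have "(\<Sum>i\<in>L. x i) = (\<Sum>i\<in>L. Bc i) + (\<Sum>l\<in>R. Bc l)" using ydef yc ysplit by simp
      then show ?thesis unfolding s_def sum_subtractf by (simp add: algebra_simps)
    qed
    have hs: "\<And>i. i \<in> L \<Longrightarrow> norm (s i) \<le> (\<Sum>l\<in>R. mu l i * norm (Bc l)) + (\<Sum>j\<in>L-{i}. mu j i * norm (s j))"
    proof -
      fix i assume i: "i \<in> L"
      have iL: "i < n" using i Lsub by auto
      define A where "A = (\<Sum>l\<in>R. mu l i * norm (Bc l))"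
      define B where "B = (\<Sum>j\<in>L-{i}. mu j i * norm (s j))"
      have zs: "(\<Sum>j\<in>L. s j) = s i + (\<Sum>j\<in>L-{i}. s j)" using finL i by (simp add: sum.remove)
      have "(norm (s i))\<^sup>2 = s i \<bullet> s i" by (simp add: power2_norm_eq_inner)
      also have "\<dots> = s i \<bullet> (\<Sum>j\<in>L. s j) - s i \<bullet> (\<Sum>j\<in>L-{i}. s j)" using zs by (simp add: inner_add_right)
      also have "\<dots> = (\<Sum>l\<in>R. s i \<bullet> Bc l) - (\<Sum>j\<in>L-{i}. s i \<bullet> s j)"
        unfolding zdef[symmetric] by (simp add: inner_sum_right)
      also have "\<dots> \<le> \<bar>\<Sum>l\<in>R. s i \<bullet> Bc l\<bar> + \<bar>\<Sum>j\<in>L-{i}. s i \<bullet> s j\<bar>" by arith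
      also have "\<dots> \<le> (\<Sum>l\<in>R. \<bar>s i \<bullet> Bc l\<bar>) + (\<Sum>j\<in>L-{i}. \<bar>s i \<bullet> s j\<bar>)"
        by (intro add_mono sum_abs)
      also have "\<dots> \<le> (\<Sum>l\<in>R. mu l i * norm (Bc l) * norm (s i)) + (\<Sum>j\<in>L-{i}. mu j i * norm (s j) * norm (s i))"
      proof (intro add_mono sum_mono)
        fix l assume "l \<in> R"
        then have "l < n" unfolding R_def by simp
        have "\<bar>Bc l \<bullet> s i\<bar> \<le> mu l i * norm (Bc l) * norm (s i)"
          unfolding mu_def by (rule coh_bound[OF Bcin]) (use s_in i in auto)
        then show "\<bar>s i \<bullet> Bc l\<bar> \<le> mu l i * norm (Bc l) * norm (s i)" by (simp add: inner_commute)
      next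
        fix j assume "j \<in> L - {i}"
        then have "s j \<in> blk_subspace b m j" using s_in by auto
        then have "\<bar>s j \<bullet> s i\<bar> \<le> mu j i * norm (s j) * norm (s i)"
          unfolding mu_def by (rule coh_bound) (use s_in i in auto)
        then show "\<bar>s i \<bullet> s j\<bar> \<le> mu j i * norm (s j) * norm (s i)" by (simp add: inner_commute)
      qed
      also have "\<dots> = (A + B) * norm (s i)" unfolding A_def B_def distrib_right sum_distrib_right by (rule refl)
      finally have sq: "(norm (s i))\<^sup>2 \<le> (A + B) * norm (s i)" .
      have A0: "0 \<le> A" unfolding A_def using mu_nn iL unfolding R_def by (intro sum_nonneg mult_nonneg_nonneg) auto
      have B0: "0 \<le> B" unfolding B_def using mu_nn iL Lsub by (intro sum_nonneg mult_nonneg_nonneg) auto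
      have fin: "norm (s i) \<le> A + B"
      proof (cases "norm (s i) = 0")
        case True then show ?thesis using A0 B0 by simp
      next
        case False
        then have "0 < norm (s i)" by simp
        moreover have "norm (s i) * norm (s i) \<le> (A + B) * norm (s i)" using sq by (simp add: power2_eq_square)
        ultimately show ?thesis by (simp add: mult_le_cancel_right)
      qed
      then show "norm (s i) \<le> (\<Sum>l\<in>R. mu l i * norm (Bc l)) + (\<Sum>j\<in>L-{i}. mu j i * norm (s j))"
        unfolding A_def B_def .
    qed
    define T where "T = (\<Sum>i\<in>L. norm (s i))"
    have hz: "\<And>l. l \<in> R \<Longrightarrow> (\<Sum>i\<in>L. mu l i) \<le> z"
      unfolding mu_def z_def R_def using cum_le[OF Lsub cardL] by auto
    have hz': "\<And>j. j \<in> L \<Longrightarrow> (\<Sum>i\<in>L-{j}. mu j i) \<le> z'"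
    proof -
      fix j assume j: "j \<in> L"
      have "card (L - {j}) = k - 1" using j finL cardL by simp
      moreover have "L - {j} \<subseteq> {..<n}" "j < n" "j \<notin> L - {j}" using Lsub j by auto
      ultimately show "(\<Sum>i\<in>L-{j}. mu j i) \<le> z'" unfolding mu_def z'_def using cum_le by blast
    qed
    have z_nn: "0 \<le> z"
    proof -
      have "0 \<le> (\<Sum>i\<in>L. mu l0 i)" using mu_nn l0 Lsub by (intro sum_nonneg) auto
      then show ?thesis using hz[OF l0R] by linarith
    qed
    have z'_nn: "0 \<le> z'"
    proof -
      have "L \<noteq> {}" using cardL k by auto
      then obtain j where j: "j \<in> L" by blast
      have "0 \<le> (\<Sum>i\<in>L-{j}. mu j i)" using mu_nn j Lsub by (intro sum_nonneg) auto
      then show ?thesis using hz'[OF j] by linarith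
    qed
    have P1: "(\<Sum>i\<in>L. \<Sum>l\<in>R. mu l i * norm (Bc l)) \<le> z * (sqrt (1 + sig) * C)"
    proof -
      have "(\<Sum>i\<in>L. \<Sum>l\<in>R. mu l i * norm (Bc l)) = (\<Sum>l\<in>R. norm (Bc l) * (\<Sum>i\<in>L. mu l i))"
        by (subst sum.swap) (simp add: sum_distrib_left mult.commute)
      also have "\<dots> \<le> (\<Sum>l\<in>R. norm (Bc l) * z)"
        by (intro sum_mono mult_left_mono hz) auto
      also have "\<dots> \<le> (\<Sum>l\<in>R. sqrt (1 + sig) * N l * z)"
        using hBc z_nn unfolding R_def by (intro sum_mono mult_right_mono) auto
      also have "\<dots> = z * (sqrt (1 + sig) * C)" unfolding C_def sum_distrib_left
        by (intro sum.cong refl) (simp add: algebra_simps)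
      finally show ?thesis .
    qed
    have P2: "(\<Sum>i\<in>L. \<Sum>j\<in>L-{i}. mu j i * norm (s j)) \<le> z' * T"
    proof -
      have "(\<Sum>i\<in>L. \<Sum>j\<in>L-{i}. mu j i * norm (s j)) = (\<Sum>i\<in>L. \<Sum>j\<in>L. if j = i then 0 else mu j i * norm (s j))"
        using finL by (simp add: sum_minus_if)
      also have "\<dots> = (\<Sum>j\<in>L. \<Sum>i\<in>L. if j = i then 0 else mu j i * norm (s j))" by (rule sum.swap)
      also have "\<dots> = (\<Sum>j\<in>L. \<Sum>i\<in>L. if i = j then 0 else mu j i * norm (s j))"
        by (intro sum.cong refl) auto
      also have "\<dots> = (\<Sum>j\<in>L. \<Sum>i\<in>L-{j}. mu j i * norm (s j))"
        using finL by (simp add: sum_minus_if)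
      also have "\<dots> = (\<Sum>j\<in>L. norm (s j) * (\<Sum>i\<in>L-{j}. mu j i))"
        by (simp add: sum_distrib_left mult.commute)
      also have "\<dots> \<le> (\<Sum>j\<in>L. norm (s j) * z')"
        by (intro sum_mono mult_left_mono hz') auto
      also have "\<dots> = z' * T" unfolding T_def by (simp add: sum_distrib_left mult.commute)
      finally show ?thesis .
    qed
    have Tbound: "T \<le> z * (sqrt (1 + sig) * C) + z' * T"
    proof -
      have "T \<le> (\<Sum>i\<in>L. (\<Sum>l\<in>R. mu l i * norm (Bc l)) + (\<Sum>j\<in>L-{i}. mu j i * norm (s j)))"
        unfolding T_def by (rule sum_mono) (rule hs)
      also have "\<dots> = (\<Sum>i\<in>L. \<Sum>l\<in>R. mu l i * norm (Bc l)) + (\<Sum>i\<in>L. \<Sum>j\<in>L-{i}. mu j i * norm (s j))"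
        by (simp add: sum.distrib)
      finally show ?thesis using P1 P2 by linarith
    qed
    have alg: "z' < 1" "(z * sqrt (1 + sig))\<^sup>2 < (1 - eps) * (1 - z')\<^sup>2"
      using final_alg[OF eps_nn sig_nn z_nn z'_nn] cond unfolding sig_def eps_def z_def z'_def by auto
    define K where "K = z * sqrt (1 + sig) / (1 - z')"
    have TK: "T * (1 - z') \<le> z * sqrt (1 + sig) * C" using Tbound by (simp add: algebra_simps)
    have allE': "\<And>e. intra_rip_ok q b m n e \<Longrightarrow> 1 - K\<^sup>2 \<le> e"
    proof -
      fix e assume ok: "intra_rip_ok q b m n e"
      show "1 - K\<^sup>2 \<le> e"
      proof (cases "e < 1")
        case False
        have "0 \<le> K\<^sup>2" by simp
        then show ?thesis using False by linarith
      next
        case True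
        have "\<forall>i\<in>L. \<exists>a. s i = (\<Sum>j<m i. a j *\<^sub>R b i j) \<and> (1 - e) * (lq_norm q (m i) a)\<^sup>2 \<le> (norm (s i))\<^sup>2"
          using intra_rep[OF ok] s_in Lsub by blast
        then obtain a where a: "\<forall>i\<in>L. s i = (\<Sum>j<m i. a i j *\<^sub>R b i j) \<and> (1 - e) * (lq_norm q (m i) (a i))\<^sup>2 \<le> (norm (s i))\<^sup>2"
          by metis
        define c' where "c' i j = (if i \<in> L then c i j + a i j else 0)" for i j
        have LL: "{..<n} \<inter> L = L" using Lsub by blast
        have dc': "y = dict_mult b m n c'"
        proof -
          have "dict_mult b m n c' = (\<Sum>i<n. if i \<in> L then Bc i + s i else 0)"
            unfolding dict_mult_def
          proof (rule sum.cong[OF refl])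
            fix i assume "i \<in> {..<n}"
            show "(\<Sum>j<m i. c' i j *\<^sub>R b i j) = (if i \<in> L then Bc i + s i else 0)"
            proof (cases "i \<in> L")
              case True
              then have "(\<Sum>j<m i. c' i j *\<^sub>R b i j) = (\<Sum>j<m i. c i j *\<^sub>R b i j + a i j *\<^sub>R b i j)"
                unfolding c'_def by (simp add: scaleR_add_left)
              also have "\<dots> = Bc i + s i" using a True unfolding Bc_def by (simp add: sum.distrib)
              finally show ?thesis using True by simp
            qed (simp add: c'_def)
          qed
          also have "\<dots> = (\<Sum>i\<in>{..<n} \<inter> L. Bc i + s i)" by (simp add: sum.inter_restrict)
          also have "\<dots> = (\<Sum>i\<in>L. x i)" unfolding LL s_def by simp
          finally show ?thesis using ydef by simp
        qed
        have mc': "mixed_norm q m n c' \<le> (\<Sum>i\<in>L. N i) + (\<Sum>i\<in>L. lq_norm q (m i) (a i))"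
        proof -
          have "mixed_norm q m n c' = (\<Sum>i<n. if i \<in> L then lq_norm q (m i) (\<lambda>j. c i j + a i j) else 0)"
            unfolding mixed_norm_def c'_def by (intro sum.cong refl) (simp add: lq_zero_fun)
          also have "\<dots> = (\<Sum>i\<in>{..<n} \<inter> L. lq_norm q (m i) (\<lambda>j. c i j + a i j))" by (simp add: sum.inter_restrict)
          also have "\<dots> = (\<Sum>i\<in>L. lq_norm q (m i) (\<lambda>j. c i j + a i j))" unfolding LL ..
          also have "\<dots> \<le> (\<Sum>i\<in>L. N i + lq_norm q (m i) (a i))"
            unfolding N_def lq_eq by (intro sum_mono lq_minkowski q) simp
          also have "\<dots> = (\<Sum>i\<in>L. N i) + (\<Sum>i\<in>L. lq_norm q (m i) (a i))" by (simp add: sum.distrib)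
          finally show ?thesis .
        qed
        have mc: "mixed_norm q m n c = (\<Sum>i\<in>L. N i) + C"
          unfolding mixed_norm_def N_def[symmetric] C_def R_def
          using sum.subset_diff[OF Lsub, of N] by (simp add: add.commute)
        have "mixed_norm q m n c \<le> mixed_norm q m n c'" using optc dc' by blast
        then have CA: "C \<le> (\<Sum>i\<in>L. lq_norm q (m i) (a i))" using mc mc' by linarith
        have ha: "\<And>i. i \<in> L \<Longrightarrow> sqrt (1 - e) * lq_norm q (m i) (a i) \<le> norm (s i)"
        proof -
          fix i assume i: "i \<in> L"
          have "(1 - e) * (lq_norm q (m i) (a i))\<^sup>2 \<le> (norm (s i))\<^sup>2" using a i by blast
          then have "sqrt ((1 - e) * (lq_norm q (m i) (a i))\<^sup>2) \<le> sqrt ((norm (s i))\<^sup>2)" by (rule real_sqrt_le_mono)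
          then show "sqrt (1 - e) * lq_norm q (m i) (a i) \<le> norm (s i)"
            by (simp add: real_sqrt_mult lq_eq lq_nonneg)
        qed
        have "sqrt (1 - e) * C \<le> sqrt (1 - e) * (\<Sum>i\<in>L. lq_norm q (m i) (a i))"
          using CA True by (intro mult_left_mono) auto
        also have "\<dots> = (\<Sum>i\<in>L. sqrt (1 - e) * lq_norm q (m i) (a i))" by (simp add: sum_distrib_left)
        also have "\<dots> \<le> T" unfolding T_def by (intro sum_mono ha)
        finally have h1: "sqrt (1 - e) * C \<le> T" .
        have z1: "0 < 1 - z'" using alg by simp
        have "sqrt (1 - e) * C * (1 - z') \<le> T * (1 - z')" using h1 z1 by (intro mult_right_mono) auto
        also have "\<dots> \<le> z * sqrt (1 + sig) * C" by (rule TK)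
        finally have "(sqrt (1 - e) * (1 - z')) * C \<le> (z * sqrt (1 + sig)) * C" by (simp add: algebra_simps)
        then have "sqrt (1 - e) * (1 - z') \<le> z * sqrt (1 + sig)" using Cpos by (simp add: mult_le_cancel_right)
        then have sK: "sqrt (1 - e) \<le> K" unfolding K_def using z1 by (simp add: pos_le_divide_eq)
        have "(sqrt (1 - e))\<^sup>2 \<le> K\<^sup>2" using sK True by (intro power_mono) auto
        then show ?thesis using True by simp
      qed
    qed
    have "1 - K\<^sup>2 \<le> eps" unfolding eps_def by (rule intra_inf[OF q unit_cols allE'])
    moreover have "K\<^sup>2 < 1 - eps"
    proof -
      have z1: "0 < (1 - z')\<^sup>2" using alg by simp
      have "K\<^sup>2 = (z * sqrt (1 + sig))\<^sup>2 / (1 - z')\<^sup>2" unfolding K_def by (simp add: power_divide)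
      also have "\<dots> < 1 - eps" using alg(2) z1 by (simp add: pos_divide_less_eq)
      finally show ?thesis .
    qed
    ultimately show False by linarith
  qed
qed

end
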